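(* Let $0<\alpha<1$, let $g:\mathbb{R}\to\mathbb{R}$ be locally bounded with $g\in C^\alpha(x_0)$, i.e. there exist $C>0$ and a constant $c$ such that $|g(x)-c|\le C|x-x_0|^\alpha$ on a neighbourhood of $x_0$. Let $\Omega=\{(x,y)\in\mathbb{R}^2: y\le g(x)\}$ be the domain below the graph of $g$ (respectively $\Omega=\{(x,y): y\ge g(x)\}$ the domain above it), and $X_0=(x_0,g(x_0))$. Then $X_0$ is strong $\left(\frac1\alpha-1\right)$-accessible in both $\Omega$ and $\Omega^c=\mathbb{R}^2\setminus\Omega$, i.e. for $A\in\{\Omega,\Omega^c\}$ there exist $C'>0$ and $r_0>0$ such that $\mathrm{meas}(A\cap B(X_0,r))\ge C' r^{\frac1\alpha+1}$ for all $r\le r_0$.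
   Context: $\mathrm{meas}$ denotes Lebesgue measure on $\mathbb{R}^2$ and $B(X,r)$ the open disc of centre $X$ and radius $r$. *)

theory Defs
  imports "HOL-Analysis.Analysis"
begin

text \<open>For Lebesgue measurable sets this is exactly the Lebesgue measure; it is used so that
  no measurability assumption on g has to be added.\<close>
definition meas :: "(real \<times> real) set \<Rightarrow> ennreal" where
  "meas A = (SUP S \<in> {S \<in> sets lebesgue. S \<subseteq> A}. emeasure lebesgue S)"

definition locally_bounded :: "(real \<Rightarrow> real) \<Rightarrow> bool" where
  "locally_bounded g \<longleftrightarrow> (\<forall>x. \<exists>e>0. \<exists>M. \<forall>y. \<bar>y - x\<bar> < e \<longrightarrow> \<bar>g y\<bar> \<le> M)"

definition holder_at :: "real \<Rightarrow> (real \<Rightarrow> real) \<Rightarrow> real \<Rightarrow> bool" where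
  "holder_at \<alpha> g x0 \<longleftrightarrow> (\<exists>C>0. \<exists>c. \<exists>\<delta>>0. \<forall>x. \<bar>x - x0\<bar> < \<delta> \<longrightarrow>
       \<bar>g x - c\<bar> \<le> C * \<bar>x - x0\<bar> powr \<alpha>)"

definition strong_accessible :: "real \<Rightarrow> (real \<times> real) set \<Rightarrow> real \<times> real \<Rightarrow> bool" where
  "strong_accessible \<beta> A X0 \<longleftrightarrow> (\<exists>C'>0. \<exists>r0>0. \<forall>r. 0 < r \<and> r \<le> r0 \<longrightarrow>
       meas (A \<inter> ball X0 r) \<ge> ennreal (C' * r powr (\<beta> + 2)))"

end

theory Submission imports Defs begin
lemma meas_rect:
  assumes "{a<..<b} \<times> {l<..<u} \<subseteq> A" "a \<le> b" "l \<le> u"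
  shows "ennreal ((b-a)*(u-l)) \<le> meas A"
proof -
  let ?R = "{a<..<b} \<times> {l<..<u} :: (real\<times>real) set"
  have Rb: "?R \<in> sets lborel" by (simp add: lborel_prod[symmetric])
  have "emeasure lebesgue ?R = emeasure lborel ?R"
    using Rb by simp
  also have "\<dots> = emeasure (lborel \<Otimes>\<^sub>M lborel) ?R" by (simp add: lborel_prod)
  also have "\<dots> = emeasure lborel {a<..<b} * emeasure lborel {l<..<u}"
    by (rule sigma_finite_measure.emeasure_pair_measure_Times) (auto intro: lborel.sigma_finite_measure_axioms)
  also have "\<dots> = ennreal ((b-a)*(u-l))" using assms by (simp add: ennreal_mult)
  finally have e: "emeasure lebesgue ?R = ennreal ((b-a)*(u-l))" .
  have "?R \<in> {S \<in> sets lebesgue. S \<subseteq> A}" using Rb assms(1) by auto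
  then have "emeasure lebesgue ?R \<le> meas A" unfolding meas_def by (rule SUP_upper)
  with e show ?thesis by simp
qed

lemma scaling:
  fixes \<alpha> C \<delta> :: real
  assumes a: "0<\<alpha>" "\<alpha><1" "C>0" "\<delta>>0"
  obtains k r0 where "k > 0" "r0 > 0" "\<And>r. 0 < r \<Longrightarrow> r \<le> r0 \<Longrightarrow>
     k * r powr (1/\<alpha>) \<le> r/4 \<and> k * r powr (1/\<alpha>) < \<delta> \<and> C * (k * r powr (1/\<alpha>)) powr \<alpha> = r/2"
proof -
  define p where "p = 1/\<alpha>"
  have p1: "p > 1" using a by (simp add: p_def)
  define k where "k = (2*C) powr (-p)"
  have k0: "k > 0" using a by (simp add: k_def)
  define r0 where "r0 = min \<delta> ((1/(4*k)) powr (1/(p-1)))"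
  have r00: "r0 > 0" using a k0 by (simp add: r0_def)
  show ?thesis
  proof (rule that[OF k0 r00])
    fix r :: real assume r: "0 < r" "r \<le> r0"
    have "r powr (p-1) \<le> r0 powr (p-1)" using r p1 by (intro powr_mono2) auto
    also have "\<dots> \<le> ((1/(4*k)) powr (1/(p-1))) powr (p-1)"
      using r00 p1 by (intro powr_mono2) (auto simp: r0_def)
    also have "\<dots> = 1/(4*k)" using p1 k0 by (simp add: powr_powr)
    finally have rp: "r powr (p-1) \<le> 1/(4*k)" .
    have "k * r powr p = k * r powr (p-1) * r" using r by (simp add: powr_diff)
    also have "\<dots> \<le> k * (1/(4*k)) * r" using rp k0 r by (intro mult_right_mono mult_left_mono) auto
    also have "\<dots> = r/4" using k0 by simp
    finally have s1: "k * r powr p \<le> r/4" .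
    have s2: "k * r powr p < \<delta>" using s1 r a by (simp add: r0_def)
    have "(k * r powr p) powr \<alpha> = k powr \<alpha> * r powr (p*\<alpha>)"
      using k0 r by (simp add: powr_mult powr_powr)
    also have "\<dots> = (2*C) powr (-1) * r" using a r by (simp add: k_def p_def powr_powr)
    finally have "C * (k * r powr p) powr \<alpha> = r/2" using a by (simp add: powr_minus field_simps)
    then show "k * r powr (1/\<alpha>) \<le> r/4 \<and> k * r powr (1/\<alpha>) < \<delta> \<and> C * (k * r powr (1/\<alpha>)) powr \<alpha> = r/2"
      using s1 s2 by (simp add: p_def)
  qed
qed

lemma acc_gen:
  fixes \<alpha> C \<delta> c x0 :: real and A :: "(real\<times>real) set"
  assumes a: "0<\<alpha>" "\<alpha><1" "C>0" "\<delta>>0" and \<sigma>: "\<sigma> = 1 \<or> \<sigma> = -1"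
  and H: "\<And>x y. \<bar>x - x0\<bar> < \<delta> \<Longrightarrow> \<sigma>*(c - y) > C*\<bar>x-x0\<bar> powr \<alpha> \<Longrightarrow> (x,y) \<in> A"
  shows "strong_accessible (1/\<alpha> - 1) A (x0, c)"
proof -
  obtain k r0 where k: "k > 0" "r0 > 0" and K: "\<And>r. 0 < r \<Longrightarrow> r \<le> r0 \<Longrightarrow>
     k * r powr (1/\<alpha>) \<le> r/4 \<and> k * r powr (1/\<alpha>) < \<delta> \<and> C * (k * r powr (1/\<alpha>)) powr \<alpha> = r/2"
    using scaling[OF a] by blast
  show ?thesis unfolding strong_accessible_def
  proof (rule exI[of _ "k/2"], rule conjI)
    show "k/2 > 0" using k by auto
    show "\<exists>r0>0. \<forall>r. 0 < r \<and> r \<le> r0 \<longrightarrow> ennreal (k/2 * r powr (1/\<alpha> - 1 + 2)) \<le> meas (A \<inter> ball (x0,c) r)"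
    proof (rule exI[of _ r0], intro conjI allI impI)
    show "r0 > 0" using k by auto
    fix r assume r: "0 < r \<and> r \<le> r0"
    define s where "s = k * r powr (1/\<alpha>)"
    have s: "s \<le> r/4" "s < \<delta>" "C * s powr \<alpha> = r/2" "s > 0" using K[of r] r k by (auto simp: s_def)
    define l where "l = (if \<sigma> = 1 then c - 3*r/4 else c + r/2)"
    define u where "u = (if \<sigma> = 1 then c - r/2 else c + 3*r/4)"
    have sub: "{x0-s<..<x0+s} \<times> {l<..<u} \<subseteq> A \<inter> ball (x0,c) r"
    proof safe
      fix x y assume x: "x \<in> {x0-s<..<x0+s}" and y: "y \<in> {l<..<u}"
      have ax: "\<bar>x - x0\<bar> < s" using x by auto
      have "C*\<bar>x-x0\<bar> powr \<alpha> \<le> C * s powr \<alpha>" using ax a by (intro mult_left_mono powr_mono2) auto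
      also have "\<dots> < \<sigma>*(c - y)" using s(3) y \<sigma> by (auto simp: l_def u_def split: if_splits)
      finally show "(x,y) \<in> A" using H ax s by auto
      have "\<bar>x0-x\<bar> < r/4" using ax s by linarith
      then have "\<bar>x0-x\<bar>^2 < (r/4)^2" by (rule power_strict_mono) auto
      then have "(x0-x)^2 < (r/4)^2" by simp
      moreover have "\<bar>c-y\<bar> < 3*r/4" using y \<sigma> r by (auto simp: l_def u_def split: if_splits)
      then have "\<bar>c-y\<bar>^2 < (3*r/4)^2" by (rule power_strict_mono) auto
      then have "(c-y)^2 < (3*r/4)^2" by simp
      ultimately have "(x0-x)^2 + (c-y)^2 < (r/4)^2 + (3*r/4)^2" by linarith
      also have "\<dots> \<le> r^2" using r by (simp add: power2_eq_square field_simps)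
      finally have "(x0-x)^2 + (c-y)^2 < r^2" .
      then have "sqrt ((x0-x)^2 + (c-y)^2) < sqrt (r^2)" by (rule real_sqrt_less_mono)
      then have "sqrt ((x0-x)^2 + (c-y)^2) < r" using r by simp
      then show "(x,y) \<in> ball (x0,c) r" by (simp add: dist_prod_def dist_real_def)
    qed
    have lu: "u - l = r/4" by (simp add: l_def u_def)
    have M: "ennreal ((x0+s-(x0-s))*(u-l)) \<le> meas (A \<inter> ball (x0,c) r)"
      by (rule meas_rect[OF sub]) (use s(4) r lu in \<open>linarith+\<close>)
    have E: "k/2 * r powr (1/\<alpha> - 1 + 2) = (x0+s-(x0-s))*(u-l)"
      using r by (simp add: lu s_def powr_add field_simps)
    show "ennreal (k/2 * r powr (1/\<alpha> - 1 + 2)) \<le> meas (A \<inter> ball (x0,c) r)" unfolding E by (rule M)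
  qed
  qed
qed

theorem mainTheorem2:
  fixes \<alpha> :: real and g :: "real \<Rightarrow> real" and x0 :: real
  assumes "0 < \<alpha>" and "\<alpha> < 1"
    and "locally_bounded g"
    and "holder_at \<alpha> g x0"
    and "\<Omega> = {(x, y). y \<le> g x} \<or> \<Omega> = {(x, y). y \<ge> g x}"
  shows "strong_accessible (1 / \<alpha> - 1) \<Omega> (x0, g x0)
       \<and> strong_accessible (1 / \<alpha> - 1) (- \<Omega>) (x0, g x0)"
proof -
  obtain C c \<delta> where C: "C > 0" "\<delta> > 0" and Hc: "\<And>x. \<bar>x - x0\<bar> < \<delta> \<Longrightarrow> \<bar>g x - c\<bar> \<le> C * \<bar>x - x0\<bar> powr \<alpha>"
    using assms(4) unfolding holder_at_def by blast
  have "\<bar>g x0 - c\<bar> \<le> 0" using Hc[of x0] C by simp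
  then have gc: "g x0 = c" by simp
  have a: "0<\<alpha>" "\<alpha><1" "C>0" "\<delta>>0" using assms C by auto
  have lo: "strong_accessible (1/\<alpha> - 1) A (x0, g x0)"
    if "\<And>x y. \<bar>x - x0\<bar> < \<delta> \<Longrightarrow> y < g x \<Longrightarrow> (x,y) \<in> A" for A
    unfolding gc
  proof (rule acc_gen[OF a, of 1])
    fix x y assume "\<bar>x - x0\<bar> < \<delta>" "1*(c - y) > C*\<bar>x-x0\<bar> powr \<alpha>"
    with Hc[of x] that[of x y] show "(x,y) \<in> A" by auto
  qed simp
  have up: "strong_accessible (1/\<alpha> - 1) A (x0, g x0)"
    if "\<And>x y. \<bar>x - x0\<bar> < \<delta> \<Longrightarrow> y > g x \<Longrightarrow> (x,y) \<in> A" for A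
    unfolding gc
  proof (rule acc_gen[OF a, of "-1"])
    fix x y assume "\<bar>x - x0\<bar> < \<delta>" "-1*(c - y) > C*\<bar>x-x0\<bar> powr \<alpha>"
    with Hc[of x] that[of x y] show "(x,y) \<in> A" by auto
  qed simp
  from assms(5) show ?thesis
  proof
    assume \<Omega>: "\<Omega> = {(x, y). y \<le> g x}"
    show ?thesis using lo[of \<Omega>] up[of "-\<Omega>"] by (auto simp: \<Omega>)
  next
    assume \<Omega>: "\<Omega> = {(x, y). y \<ge> g x}"
    show ?thesis using up[of \<Omega>] lo[of "-\<Omega>"] by (auto simp: \<Omega>)
  qed
qed
end
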